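(* Let $\mathcal{A}$ be a unital algebra over a field $F$ with $\operatorname{char}(F)\neq2$, having an idempotent $e\neq0,1$, and write $e^{\perp}=1-e$. Assume that for every $x\in\mathcal{A}$: if $exe\cdot e\mathcal{A}e^{\perp}=\{0\}=e^{\perp}\mathcal{A}e\cdot exe$ then $exe=0$, and if $e\mathcal{A}e^{\perp}\cdot e^{\perp}xe^{\perp}=\{0\}=e^{\perp}xe^{\perp}\cdot e^{\perp}\mathcal{A}e$ then $e^{\perp}xe^{\perp}=0$. Then $\operatorname{QJDer}(\mathcal{A})=\operatorname{Cent}(\mathcal{A})+\operatorname{JDer}(\mathcal{A})$.
   Context: $x\circ y=xy+yx$. $\operatorname{QJDer}(\mathcal{A})$: linear $f:\mathcal{A}\to\mathcal{A}$ for which there is a linear $h$ with $f(x)\circ y+x\circ f(y)=h(x\circ y)$ for all $x,y$. $\operatorname{Cent}(\mathcal{A})$: linear $f$ with $f(xy)=f(x)y=xf(y)$. $\operatorname{JDer}(\mathcal{A})$: linear $d$ with $d(x\circ y)=d(x)\circ y+x\circ d(y)$. Sums of sets of maps are sets of pointwise sums. *)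

theory Defs
  imports Complex_Main
begin

definition unital_algebra :: "('k::field \<Rightarrow> 'a::ring_1 \<Rightarrow> 'a) \<Rightarrow> bool" where
  "unital_algebra sc \<longleftrightarrow> vector_space sc \<and>
     (\<forall>c x y. sc c (x * y) = sc c x * y \<and> sc c (x * y) = x * sc c y)"

definition jprod :: "'a::ring \<Rightarrow> 'a \<Rightarrow> 'a" (infixl "\<circ>\<^sub>J" 70) where
  "jprod x y = x * y + y * x"

definition QJDer :: "('k::field \<Rightarrow> 'a::ring_1 \<Rightarrow> 'a) \<Rightarrow> ('a \<Rightarrow> 'a) set" where
  "QJDer sc = {f. Vector_Spaces.linear sc sc f \<and>
     (\<exists>h. Vector_Spaces.linear sc sc h \<and>
        (\<forall>x y. f x \<circ>\<^sub>J y + x \<circ>\<^sub>J f y = h (x \<circ>\<^sub>J y)))}"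

definition Cent :: "('k::field \<Rightarrow> 'a::ring_1 \<Rightarrow> 'a) \<Rightarrow> ('a \<Rightarrow> 'a) set" where
  "Cent sc = {f. Vector_Spaces.linear sc sc f \<and>
     (\<forall>x y. f (x * y) = f x * y \<and> f (x * y) = x * f y)}"

definition JDer :: "('k::field \<Rightarrow> 'a::ring_1 \<Rightarrow> 'a) \<Rightarrow> ('a \<Rightarrow> 'a) set" where
  "JDer sc = {d. Vector_Spaces.linear sc sc d \<and>
     (\<forall>x y. d (x \<circ>\<^sub>J y) = d x \<circ>\<^sub>J y + x \<circ>\<^sub>J d y)}"

definition map_set_plus :: "('a \<Rightarrow> 'b::plus) set \<Rightarrow> ('a \<Rightarrow> 'b) set \<Rightarrow> ('a \<Rightarrow> 'b) set" where
  "map_set_plus S T = {(\<lambda>x. f x + g x) | f g. f \<in> S \<and> g \<in> T}"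

end

theory Submission
  imports Defs
begin

lemma halfcancel:
  assumes vs: "vector_space (sc::'k::field \<Rightarrow> 'a::ring_1 \<Rightarrow> 'a)" and c: "(2::'k) \<noteq> 0"
    and uv: "u + u = (v::'a) + v"
  shows "u = v"
proof -
  have h: "\<And>w. sc (1/2) (w + w) = w"
  proof -
    fix w
    have "sc (1/2) (w + w) = sc (1/2 + 1/2) w"
      using vs unfolding vector_space_def by metis
    also have "1/2 + 1/2 = (1::'k)" using c by (simp add: field_simps)
    finally show "sc (1/2) (w + w) = w" using vs by (simp add: vector_space.vector_space_assms)
  qed
  show ?thesis by (metis h uv)
qed

lemma peirce: "(x::'a::ring_1) = e*x*e + e*x*(1-e) + (1-e)*x*e + (1-e)*x*(1-e)"
proof -
  have 1: "e*x*e + e*x*(1-e) = e*x" by (simp add: right_diff_distrib)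
  have 2: "(1-e)*x*e + (1-e)*x*(1-e) = (1-e)*x" by (simp only: right_diff_distrib mult_1_right) simp
  have 3: "e*x + (1-e)*x = x" by (simp add: left_diff_distrib)
  show ?thesis using 1 2 3 by (metis add.assoc)
qed

lemma proj12:
  fixes e z a1 a2 u b :: "'a::ring_1"
  assumes idem: "e*e = e" and ZE: "e*z = z*e" and a1: "e*a1 = a1" "a1*e = 0"
    and a2: "e*a2 = 0" "a2*e = a2" and u: "e*u = u" "u*e = 0"
    and hc: "\<And>u v. u + u = (v::'a) + v \<Longrightarrow> u = v"
    and eq: "((z*e+a1+a2) \<circ>\<^sub>J u + e \<circ>\<^sub>J b) + ((z*e+a1+a2) \<circ>\<^sub>J u + e \<circ>\<^sub>J b) = b + b + (u*z + z*u)"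
  shows "z*u = u*z"
proof -
  have r: "e*(e*w) = e*w" "e*(z*w) = z*(e*w)" "e*(a1*w) = a1*w" "a1*(e*w) = 0"
     "e*(a2*w) = 0" "a2*(e*w) = a2*w" "e*(u*w) = u*w" "u*(e*w) = 0" for w
    using idem ZE a1 a2 u by (simp_all add: mult.assoc[symmetric])
  have r2: "a1*u = 0" "u*a1 = 0" "u*(z*e) = 0" "u*(z*(e*w)) = 0" for w
  proof -
    show "a1*u = 0" by (metis a1(2) u(1) mult.assoc mult_zero_left)
    show "u*a1 = 0" by (metis a1(1) u(2) mult.assoc mult_zero_left)
    show "u*(z*e) = 0" by (metis ZE u(2) mult.assoc mult_zero_left)
    show "u*(z*(e*w)) = 0" by (metis ZE u(2) mult.assoc mult_zero_left)
  qed
  have "e * (((z*e+a1+a2) \<circ>\<^sub>J u + e \<circ>\<^sub>J b) + ((z*e+a1+a2) \<circ>\<^sub>J u + e \<circ>\<^sub>J b)) * (1-e)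
     = e * (b + b + (u*z + z*u)) * (1-e)" using eq by simp
  hence "z*u + z*u = u*z + z*u"
    apply (simp add: jprod_def ring_distribs mult.assoc idem ZE a1 a2 u r r2)
    done
  thus ?thesis by simp
qed

lemma proj21:
  fixes e z a1 a2 u b :: "'a::ring_1"
  assumes idem: "e*e = e" and ZE: "e*z = z*e" and a1: "e*a1 = a1" "a1*e = 0"
    and a2: "e*a2 = 0" "a2*e = a2" and u: "u*e = u" "e*u = 0"
    and eq: "((z*e+a1+a2) \<circ>\<^sub>J u + e \<circ>\<^sub>J b) + ((z*e+a1+a2) \<circ>\<^sub>J u + e \<circ>\<^sub>J b) = b + b + (u*z + z*u)"
  shows "z*u = u*z"
proof -
  have r: "e*(e*w) = e*w" "e*(z*w) = z*(e*w)" "e*(a1*w) = a1*w" "a1*(e*w) = 0"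
     "e*(a2*w) = 0" "a2*(e*w) = a2*w" "e*(u*w) = 0" "u*(e*w) = u*w" for w
    using idem ZE a1 a2 u by (simp_all add: mult.assoc[symmetric])
  have r2: "a2*u = 0" "u*a2 = 0" "u*(z*e) = u*z"
  proof -
    show "u*(z*e) = u*z" by (metis ZE u(1) mult.assoc)
    show "a2*u = 0" by (metis a2(2) u(2) mult.assoc mult_zero_right)
    show "u*a2 = 0" by (metis a2(1) u(1) mult.assoc mult_zero_right)
  qed
  have "(1-e) * (((z*e+a1+a2) \<circ>\<^sub>J u + e \<circ>\<^sub>J b) + ((z*e+a1+a2) \<circ>\<^sub>J u + e \<circ>\<^sub>J b)) * e
     = (1-e) * (b + b + (u*z + z*u)) * e" using eq by simp
  hence "u*z + u*z = u*z + z*u"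
    apply (simp add: jprod_def ring_distribs mult.assoc idem ZE a1 a2 u r r2)
    done
  thus ?thesis by simp
qed

lemma central:
  fixes f h :: "'a::ring_1 \<Rightarrow> 'a" and e :: 'a
  assumes hadd: "\<And>x y. h (x + y) = h x + h y"
    and J: "\<And>x y. f x \<circ>\<^sub>J y + x \<circ>\<^sub>J f y = h (x \<circ>\<^sub>J y)"
    and hc: "\<And>u v. u + u = (v::'a) + v \<Longrightarrow> u = v"
    and idem: "e * e = e"
    and H1: "\<And>x. (\<forall>a. (e * x * e) * (e * a * (1 - e)) = 0) \<Longrightarrow>
                  (\<forall>a. ((1 - e) * a * e) * (e * x * e) = 0) \<Longrightarrow> e * x * e = 0"
    and H2: "\<And>x. (\<forall>a. (e * a * (1 - e)) * ((1 - e) * x * (1 - e)) = 0) \<Longrightarrow>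
                  (\<forall>a. ((1 - e) * x * (1 - e)) * ((1 - e) * a * e) = 0) \<Longrightarrow>
                  (1 - e) * x * (1 - e) = 0"
  shows "f 1 * x = x * f 1"
proof -
  have idem': "\<And>w. e * (e * w) = e * w" using idem by (metis mult.assoc)
  define z where "z = f 1"
  define a where "a = f e"
  have F2: "f y + f y + (y * z + z * y) = h y + h y" for y
    using J[of y 1] hadd[of y y] unfolding z_def jprod_def by simp
  have E1: "(a*e + e*a) + (e*a + a*e) = a + a + (e*z + z*e)"
    using J[of e e] F2[of e] hadd[of e e] idem unfolding a_def jprod_def by simp
  have "e * ((a*e + e*a) + (e*a + a*e)) * (1 - e) = e * (a + a + (e*z + z*e)) * (1 - e)"
    using E1 by simp
  hence Z1: "e * z = e * z * e" by (simp add: ring_distribs mult.assoc idem idem')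
  have "(1 - e) * ((a*e + e*a) + (e*a + a*e)) * e = (1 - e) * (a + a + (e*z + z*e)) * e"
    using E1 by simp
  hence Z2: "z * e = e * z * e" by (simp add: ring_distribs mult.assoc idem idem')
  have ZE: "e * z = z * e" using Z1 Z2 by simp
  have "e * ((a*e + e*a) + (e*a + a*e)) * e = e * (a + a + (e*z + z*e)) * e"
    using E1 by simp
  hence "e*a*e + e*a*e = e*z*e + e*z*e" by (simp add: ring_distribs mult.assoc idem idem')
  hence "e*a*e = e*z*e" by (rule hc)
  also have "e*z*e = z*e*e" by (simp add: ZE)
  also have "\<dots> = z*e" by (simp add: mult.assoc idem)
  finally have A11: "e*a*e = z*e" .
  have "(1-e) * ((a*e + e*a) + (e*a + a*e)) * (1-e) = (1-e) * (a + a + (e*z + z*e)) * (1-e)"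
    using E1 by simp
  hence "(1-e)*a*(1-e) + (1-e)*a*(1-e) = 0 + 0" apply (simp add: ring_distribs mult.assoc idem idem') by (simp add: algebra_simps)
  hence A22: "(1-e)*a*(1-e) = 0" by (rule hc)
  define a1 where "a1 = e*a*(1-e)"
  define a2 where "a2 = (1-e)*a*e"
  have a1: "e*a1 = a1" "a1*e = 0" unfolding a1_def by (simp_all add: ring_distribs mult.assoc idem idem')
  have a2: "e*a2 = 0" "a2*e = a2" unfolding a2_def by (simp_all add: ring_distribs mult.assoc idem idem')
  have Adec: "f e = z*e + a1 + a2"
    using peirce[of a e] A11 A22 unfolding a1_def a2_def a_def by simp
  have Jeu: "(f e \<circ>\<^sub>J u + e \<circ>\<^sub>J f u) + (f e \<circ>\<^sub>J u + e \<circ>\<^sub>J f u) = f u + f u + (u*z + z*u)"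
    if "e*u + u*e = u" for u
  proof -
    have "f e \<circ>\<^sub>J u + e \<circ>\<^sub>J f u = h u" using J[of e u] that by (simp add: jprod_def)
    thus ?thesis using F2[of u] by simp
  qed
  have C12: "z*u = u*z" if "e*u = u" "u*e = 0" for u
    using proj12[OF idem ZE a1 a2 that hc, of "f u"] Jeu[of u] that Adec by simp
  have C21: "z*u = u*z" if "u*e = u" "e*u = 0" for u
    using proj21[OF idem ZE a1 a2 that, of "f u"] Jeu[of u] that Adec by simp
  have E12: "e*(e*c*(1-e)) = e*c*(1-e)" "(e*c*(1-e))*e = 0" for c
    by (simp_all add: ring_distribs mult.assoc idem idem')
  have E21: "((1-e)*c*e)*e = (1-e)*c*e" "e*((1-e)*c*e) = 0" for c
    by (simp_all add: ring_distribs mult.assoc idem idem')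
  have ez: "e*(z*w) = z*(e*w)" for w by (metis ZE mult.assoc)
  have D11: "z*P = P*z" if P: "e*P = P" "P*e = P" for P
  proof -
    have wE: "e*(z*P - P*z)*e = z*P - P*z"
      by (simp add: ring_distribs mult.assoc ez) (metis P ZE mult.assoc)
    have p1: "(e*(z*P - P*z)*e) * (e*c*(1-e)) = 0" for c
    proof -
      define v where "v = e*c*(1-e)"
      have v: "e*v = v" "v*e = 0" unfolding v_def using E12 by auto
      have zv: "z*v = v*z" using C12 v by blast
      have "e*(P*v) = P*v" "(P*v)*e = 0" using P v by (metis mult.assoc mult_zero_right)+
      hence zpv: "z*(P*v) = (P*v)*z" using C12 by blast
      have "(z*P - P*z) * v = 0"
        by (simp add: left_diff_distrib mult.assoc zv) (metis zpv mult.assoc)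
      thus ?thesis using wE v_def by simp
    qed
    have p2: "((1-e)*c*e) * (e*(z*P - P*z)*e) = 0" for c
    proof -
      define r where "r = (1-e)*c*e"
      have r: "r*e = r" "e*r = 0" unfolding r_def using E21 by auto
      have zr: "z*r = r*z" using C21 r by blast
      have "(r*P)*e = r*P" "e*(r*P) = 0" using P r by (metis mult.assoc mult_zero_left)+
      hence zrp: "z*(r*P) = (r*P)*z" using C21 by blast
      have "r * (z*P - P*z) = 0"
        by (simp add: right_diff_distrib mult.assoc[symmetric] zr[symmetric]) (metis zrp mult.assoc)
      thus ?thesis using wE r_def by simp
    qed
    have "e*(z*P - P*z)*e = 0" using H1[of "z*P - P*z"] p1 p2 by blast
    thus ?thesis using wE by simp
  qed
  have D22: "z*Q = Q*z" if Q: "e*Q = 0" "Q*e = 0" for Q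
  proof -
    have Qz: "Q*(z*e) = 0" by (metis Q(2) ZE mult.assoc mult_zero_left)
    have eQ: "e*(Q*w) = 0" for w by (metis Q(1) mult.assoc mult_zero_left)
    have wE: "(1-e)*(z*Q - Q*z)*(1-e) = z*Q - Q*z"
      by (simp add: ring_distribs mult.assoc ez Q Qz eQ)
    have p1: "(e*c*(1-e)) * ((1-e)*(z*Q - Q*z)*(1-e)) = 0" for c
    proof -
      define v where "v = e*c*(1-e)"
      have v: "e*v = v" "v*e = 0" unfolding v_def using E12 by auto
      have zv: "z*v = v*z" using C12 v by blast
      have "e*(v*Q) = v*Q" "(v*Q)*e = 0" using Q v by (metis mult.assoc mult_zero_right)+
      hence zvq: "z*(v*Q) = (v*Q)*z" using C12 by blast
      have "v * (z*Q - Q*z) = 0"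
        by (simp add: right_diff_distrib mult.assoc[symmetric] zv[symmetric]) (metis zvq mult.assoc)
      thus ?thesis using wE v_def by simp
    qed
    have p2: "((1-e)*(z*Q - Q*z)*(1-e)) * ((1-e)*c*e) = 0" for c
    proof -
      define r where "r = (1-e)*c*e"
      have r: "r*e = r" "e*r = 0" unfolding r_def using E21 by auto
      have zr: "z*r = r*z" using C21 r by blast
      have "(Q*r)*e = Q*r" "e*(Q*r) = 0" using Q r by (metis mult.assoc mult_zero_left)+
      hence zqr: "z*(Q*r) = (Q*r)*z" using C21 by blast
      have "(z*Q - Q*z) * r = 0"
        by (simp add: left_diff_distrib mult.assoc zr) (metis zqr mult.assoc)
      thus ?thesis using wE r_def by simp
    qed
    have "(1-e)*(z*Q - Q*z)*(1-e) = 0" using H2[of "z*Q - Q*z"] p1 p2 by blast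
    thus ?thesis using wE by simp
  qed
  have "z*x = z*(e*x*e) + z*(e*x*(1-e)) + z*((1-e)*x*e) + z*((1-e)*x*(1-e))"
    by (subst peirce[of x e]) (simp add: ring_distribs)
  also have "\<dots> = (e*x*e)*z + (e*x*(1-e))*z + ((1-e)*x*e)*z + ((1-e)*x*(1-e))*z"
  proof -
    have "z*(e*x*e) = (e*x*e)*z" by (rule D11) (simp_all add: mult.assoc idem idem')
    moreover have "z*(e*x*(1-e)) = (e*x*(1-e))*z" by (rule C12) (simp_all add: ring_distribs mult.assoc idem idem')
    moreover have "z*((1-e)*x*e) = ((1-e)*x*e)*z" by (rule C21) (simp_all add: ring_distribs mult.assoc idem idem')
    moreover have "z*((1-e)*x*(1-e)) = ((1-e)*x*(1-e))*z" by (rule D22) (simp_all add: ring_distribs mult.assoc idem idem')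
    ultimately show ?thesis by simp
  qed
  also have "\<dots> = x*z"
    by (subst (5) peirce[of x e]) (simp add: ring_distribs)
  finally show ?thesis unfolding z_def .
qed
theorem proposition4p4:
  fixes sc :: "'k::field \<Rightarrow> 'a::ring_1 \<Rightarrow> 'a" and e :: 'a
  assumes alg: "unital_algebra sc"
    and char: "(2::'k) \<noteq> 0"
    and idem: "e * e = e" and e0: "e \<noteq> 0" and e1: "e \<noteq> 1"
    and H1: "\<And>x. (\<forall>a. (e * x * e) * (e * a * (1 - e)) = 0) \<Longrightarrow>
                  (\<forall>a. ((1 - e) * a * e) * (e * x * e) = 0) \<Longrightarrow> e * x * e = 0"
    and H2: "\<And>x. (\<forall>a. (e * a * (1 - e)) * ((1 - e) * x * (1 - e)) = 0) \<Longrightarrow>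
                  (\<forall>a. ((1 - e) * x * (1 - e)) * ((1 - e) * a * e) = 0) \<Longrightarrow>
                  (1 - e) * x * (1 - e) = 0"
  shows "QJDer sc = map_set_plus (Cent sc) (JDer sc)"
proof
  have vs: "vector_space sc" using alg unfolding unital_algebra_def by blast
  have comp: "\<And>c x y. sc c (x * y) = sc c x * y" "\<And>c x y. sc c (x * y) = x * sc c y"
    using alg unfolding unital_algebra_def by blast+
  have md: "module sc" using vs by (simp add: module_iff_vector_space)
  have hc: "\<And>u v. u + u = (v::'a) + v \<Longrightarrow> u = v" using halfcancel[OF vs char] by blast
  show "QJDer sc \<subseteq> map_set_plus (Cent sc) (JDer sc)"
  proof
    fix f assume "f \<in> QJDer sc"
    then obtain h where lf: "Vector_Spaces.linear sc sc f" and lh: "Vector_Spaces.linear sc sc h"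
      and J: "\<And>x y. f x \<circ>\<^sub>J y + x \<circ>\<^sub>J f y = h (x \<circ>\<^sub>J y)"
      unfolding QJDer_def by blast
    have fadd: "\<And>x y. f (x + y) = f x + f y" and fsc: "\<And>c x. f (sc c x) = sc c (f x)"
      using lf unfolding Vector_Spaces.linear_iff by auto
    have hadd: "\<And>x y. h (x + y) = h x + h y"
      using lh unfolding Vector_Spaces.linear_iff by auto
    define z where "z = f 1"
    have cz: "\<And>x. z * x = x * z" unfolding z_def
      by (rule central[OF hadd J hc idem H1 H2])
    define L where "L = (\<lambda>x. z * x)"
    define d where "d = (\<lambda>x. f x - z * x)"
    have LC: "L \<in> Cent sc"
      unfolding Cent_def L_def Vector_Spaces.linear_iff
      using vs comp cz by (auto simp: ring_distribs mult.assoc) (metis cz mult.assoc)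
    have F2: "f y + f y + (y * z + z * y) = h y + h y" for y
      using J[of y 1] hadd[of y y] unfolding z_def jprod_def by simp
    have dJ: "d (x \<circ>\<^sub>J y) = d x \<circ>\<^sub>J y + x \<circ>\<^sub>J d y" for x y
    proof -
      define w where "w = x \<circ>\<^sub>J y"
      define S where "S = f x \<circ>\<^sub>J y + x \<circ>\<^sub>J f y"
      have "f w + f w + (z * w + z * w) = S + S"
        using F2[of w] J[of x y] cz[of w] unfolding S_def w_def by simp
      hence "(f w + z * w) + (f w + z * w) = S + S" by (simp add: algebra_simps)
      hence fw: "f w + z * w = S" by (rule hc)
      have "d x \<circ>\<^sub>J y + x \<circ>\<^sub>J d y = S - z * w - z * w"
        unfolding d_def S_def w_def jprod_def
        by (simp add: algebra_simps) (metis cz mult.assoc)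
      moreover have "f w = S - z*w" using fw by (metis add_diff_cancel_right')
      hence "d w = S - z*w - z*w" unfolding d_def by simp
      ultimately show ?thesis unfolding w_def by simp
    qed
    have dlin: "Vector_Spaces.linear sc sc d"
      unfolding Vector_Spaces.linear_iff d_def
      using vs fadd fsc comp module.scale_right_diff_distrib[OF md]
      by (auto simp: ring_distribs)
    have dJD: "d \<in> JDer sc" unfolding JDer_def using dlin dJ by blast
    have "f = (\<lambda>x. L x + d x)" unfolding L_def d_def by simp
    thus "f \<in> map_set_plus (Cent sc) (JDer sc)"
      unfolding map_set_plus_def using LC dJD by blast
  qed
  show "map_set_plus (Cent sc) (JDer sc) \<subseteq> QJDer sc"
  proof
    fix g assume "g \<in> map_set_plus (Cent sc) (JDer sc)"
    then obtain f d where g: "g = (\<lambda>x. f x + d x)" and fC: "f \<in> Cent sc" and dD: "d \<in> JDer sc"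
      unfolding map_set_plus_def by blast
    have lf: "Vector_Spaces.linear sc sc f" using fC unfolding Cent_def by blast
    have fm: "\<And>x y. f (x * y) = f x * y" "\<And>x y. f (x * y) = x * f y"
      using fC unfolding Cent_def by blast+
    have ld: "Vector_Spaces.linear sc sc d" using dD unfolding JDer_def by blast
    have dj: "\<And>x y. d (x \<circ>\<^sub>J y) = d x \<circ>\<^sub>J y + x \<circ>\<^sub>J d y"
      using dD unfolding JDer_def by blast
    have fadd: "\<And>x y. f (x + y) = f x + f y" and fsc: "\<And>c x. f (sc c x) = sc c (f x)"
      using lf unfolding Vector_Spaces.linear_iff by auto
    have dadd: "\<And>x y. d (x + y) = d x + d y" and dsc: "\<And>c x. d (sc c x) = sc c (d x)"
      using ld unfolding Vector_Spaces.linear_iff by auto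
    have sadd: "\<And>c x y. sc c (x + y) = sc c x + sc c y" using vs unfolding vector_space_def by auto
    have lg: "Vector_Spaces.linear sc sc g"
      unfolding Vector_Spaces.linear_iff g using vs fadd fsc dadd dsc sadd by (simp add: algebra_simps)
    define h where "h = (\<lambda>x. f x + f x + d x)"
    have lh: "Vector_Spaces.linear sc sc h"
      unfolding Vector_Spaces.linear_iff h_def using vs fadd fsc dadd dsc sadd by (simp add: algebra_simps)
    have "g x \<circ>\<^sub>J y + x \<circ>\<^sub>J g y = h (x \<circ>\<^sub>J y)" for x y
    proof -
      have a: "f x \<circ>\<^sub>J y = f (x \<circ>\<^sub>J y)" unfolding jprod_def using fm fadd by metis
      have b: "x \<circ>\<^sub>J f y = f (x \<circ>\<^sub>J y)" unfolding jprod_def using fm fadd by (metis add.commute)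
      have c: "(f x + d x) \<circ>\<^sub>J y + x \<circ>\<^sub>J (f y + d y) = (f x \<circ>\<^sub>J y + x \<circ>\<^sub>J f y) + (d x \<circ>\<^sub>J y + x \<circ>\<^sub>J d y)"
        unfolding jprod_def by (simp add: algebra_simps)
      show ?thesis unfolding g h_def using a b c dj by simp
    qed
    thus "g \<in> QJDer sc" unfolding QJDer_def using lg lh by blast
  qed
qed

end
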